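(* Let $V$ be a valuation domain with quotient field $K$, and let $W_1,W_2$ be torsion extensions of $V$ to $K(X)$, with valuations $w_1,w_2$ and maximal ideals $M_1,M_2$. Then: (1) The following are equivalent: (a) $w_1\le w_2$; (b) $W_1\cap K[X]\subseteq W_2\cap K[X]$; (c) $M_1\cap K[X]\subseteq M_2\cap K[X]$. (2) $W_1=W_2$ if and only if $W_1\cap K[X]=W_2\cap K[X]$, if and only if $M_1\cap K[X]=M_2\cap K[X]$. (3) The set $\mathcal{W}_{\mathrm t}$ of torsion extensions of $V$ to $K(X)$ is partially ordered by $\le$.
   Context: Let $v$ be the valuation of $V$, $\Gamma_v$ its value group, $\Gamma_{\overline{v}}=\Gamma_v\otimes_{\mathbb{Z}}\mathbb{Q}$. An extension of $V$ to $K(X)$ is a valuation domain $W$ of $K(X)$ with $W\cap K=V$; it is a torsion extension if its value group $\Gamma_w$ is contained in $\Gamma_{\overline{v}}$ (i.e. $\Gamma_w/\Gamma_v$ is torsion). For torsion extensions, $w_1\le w_2$ means $w_1(f)\le w_2(f)$ in $\Gamma_{\overline{v}}$ for all $f\in K[X]$. *)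

theory Defs
  imports "HOL-Computational_Algebra.Polynomial" "HOL-Computational_Algebra.Fraction_Field"
begin

text \<open>A (Krull) valuation on a field, given on the nonzero elements
  (the value at 0 is irrelevant and stands for infinity).\<close>
definition valuation :: "('k::field \<Rightarrow> 'g::linordered_ab_group_add) \<Rightarrow> bool" where
  "valuation v \<longleftrightarrow>
     (\<forall>x y. x \<noteq> 0 \<longrightarrow> y \<noteq> 0 \<longrightarrow> v (x * y) = v x + v y) \<and>
     (\<forall>x y. x \<noteq> 0 \<longrightarrow> y \<noteq> 0 \<longrightarrow> x + y \<noteq> 0 \<longrightarrow> min (v x) (v y) \<le> v (x + y))"

definition val_ring :: "('k::field \<Rightarrow> 'g::linordered_ab_group_add) \<Rightarrow> 'k set" where
  "val_ring v = {x. x = 0 \<or> 0 \<le> v x}"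

definition max_ideal :: "'k::field set \<Rightarrow> 'k set" where
  "max_ideal W = {x \<in> W. x = 0 \<or> inverse x \<notin> W}"

definition const_fr :: "'a::field \<Rightarrow> 'a poly fract" where
  "const_fr c = Fract [:c:] 1"

definition poly_fr :: "'a::field poly \<Rightarrow> 'a poly fract" where
  "poly_fr p = Fract p 1"

definition Kpoly :: "'a::field poly fract set" where
  "Kpoly = range poly_fr"

definition gmult :: "nat \<Rightarrow> 'g::linordered_ab_group_add \<Rightarrow> 'g" where
  "gmult n x = ((+) x ^^ n) 0"

definition torsion_ext :: "('a::field \<Rightarrow> 'g::linordered_ab_group_add) \<Rightarrow> ('a poly fract \<Rightarrow> 'g) \<Rightarrow> bool" where
  "torsion_ext v w \<longleftrightarrow> valuation w \<and>
     (\<forall>c. c \<noteq> 0 \<longrightarrow> w (const_fr c) = v c) \<and>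
     (\<forall>f. f \<noteq> 0 \<longrightarrow> (\<exists>n>0. \<exists>a. a \<noteq> 0 \<and> gmult n (w f) = v a))"

definition val_le :: "('a::field poly fract \<Rightarrow> 'g::linordered_ab_group_add) \<Rightarrow> ('a poly fract \<Rightarrow> 'g) \<Rightarrow> bool" where
  "val_le w1 w2 \<longleftrightarrow> (\<forall>p. p \<noteq> 0 \<longrightarrow> w1 (poly_fr p) \<le> w2 (poly_fr p))"

definition torsion_exts :: "('a::field \<Rightarrow> 'g::linordered_ab_group_add) \<Rightarrow> 'a poly fract set set" where
  "torsion_exts v = {val_ring w | w :: 'a poly fract \<Rightarrow> 'g. torsion_ext v w}"

definition torsion_le :: "('a::field \<Rightarrow> 'g::linordered_ab_group_add) \<Rightarrow> 'a poly fract set rel" where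
  "torsion_le v = {(val_ring w1, val_ring w2) | (w1 :: 'a poly fract \<Rightarrow> 'g) w2.
      torsion_ext v w1 \<and> torsion_ext v w2 \<and> val_le w1 w2}"

end

theory Submission
  imports Defs
begin

lemma gmult_0[simp]: "gmult 0 x = 0" by (simp add: gmult_def)
lemma gmult_Suc[simp]: "gmult (Suc n) x = x + gmult n x" by (simp add: gmult_def)

lemma gmult_add: "gmult n (x + y) = gmult n x + gmult n y"
  by (induction n) (auto simp: algebra_simps)

lemma gmult_minus: "gmult n (- x) = - gmult n x"
  by (induction n) (auto simp: algebra_simps)

lemma gmult_diff: "gmult n (x - y) = gmult n x - gmult n y"
  using gmult_add[of n x "- y"] gmult_minus[of n y] by simp

lemma gmult_plus: "gmult (a + b) x = gmult a x + gmult b x"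
  by (induction a) (auto simp: add.assoc)

lemma gmult_mult: "gmult (m * n) x = gmult m (gmult n x)"
  by (induction m) (auto simp: gmult_plus)

lemma gmult_mono_strict: "n > 0 \<Longrightarrow> x < y \<Longrightarrow> gmult n x < gmult n (y::'g::linordered_ab_group_add)"
proof (induction n)
  case 0 then show ?case by simp
next
  case (Suc n)
  show ?case
  proof (cases "n = 0")
    case True then show ?thesis using Suc by simp
  next
    case False then show ?thesis using Suc by (simp add: add_strict_mono)
  qed
qed

lemma gmult_inj: "n > 0 \<Longrightarrow> gmult n x = gmult n y \<Longrightarrow> x = (y::'g::linordered_ab_group_add)"
  by (metis gmult_mono_strict less_irrefl linorder_neqE)

lemma val_mult: "valuation w \<Longrightarrow> x \<noteq> 0 \<Longrightarrow> y \<noteq> 0 \<Longrightarrow> w (x * y) = w x + w y"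
  by (simp add: valuation_def)

lemma val_one: "valuation w \<Longrightarrow> w 1 = 0"
  using val_mult[of w 1 1] by simp

lemma val_inverse: "valuation w \<Longrightarrow> (x::'k::field) \<noteq> 0 \<Longrightarrow> w (inverse x) = - w x"
  using val_mult[of w x "inverse x"] val_one[of w] by (simp add: eq_neg_iff_add_eq_0 add.commute)

lemma val_div: "valuation w \<Longrightarrow> (x::'k::field) \<noteq> 0 \<Longrightarrow> y \<noteq> 0 \<Longrightarrow> w (x * inverse y) = w x - w y"
  by (simp add: val_mult val_inverse)

lemma val_power: "valuation w \<Longrightarrow> (x::'k::field) \<noteq> 0 \<Longrightarrow> w (x ^ n) = gmult n (w x)"
  by (induction n) (auto simp: val_one val_mult)

lemma in_val_ring: "x \<noteq> 0 \<Longrightarrow> x \<in> val_ring w \<longleftrightarrow> 0 \<le> w x"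
  by (simp add: val_ring_def)

lemma in_max_ideal: "valuation w \<Longrightarrow> (x::'k::field) \<noteq> 0 \<Longrightarrow> x \<in> max_ideal (val_ring w) \<longleftrightarrow> 0 < w x"
  by (auto simp: max_ideal_def val_ring_def val_inverse)

lemma poly_fr_0[simp]: "poly_fr 0 = 0"
  by (simp add: poly_fr_def Zero_fract_def)

lemma poly_fr_eq0[simp]: "poly_fr p = 0 \<longleftrightarrow> p = 0"
  by (simp add: poly_fr_def Zero_fract_def eq_fract)

lemma const_fr_eq0[simp]: "const_fr c = 0 \<longleftrightarrow> c = 0"
  by (simp add: const_fr_def Zero_fract_def eq_fract)

lemma poly_fr_mult: "poly_fr (p * q) = poly_fr p * poly_fr q"
  by (simp add: poly_fr_def)

lemma poly_fr_power: "poly_fr (p ^ n) = poly_fr p ^ n"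
  by (induction n) (auto simp: poly_fr_mult, simp add: poly_fr_def One_fract_def)

lemma poly_fr_smult: "poly_fr (smult c p) = const_fr c * poly_fr p"
  by (simp add: poly_fr_def const_fr_def)

lemma const_fr_inverse: "inverse (const_fr c) = const_fr (inverse c)"
proof (cases "c = 0")
  case True then show ?thesis by (simp add: const_fr_def eq_fract)
next
  case False
  then show ?thesis by (simp add: const_fr_def eq_fract)
qed

lemma const_fr_power: "const_fr (c ^ n) = const_fr c ^ n"
proof (induction n)
  case 0 then show ?case by (simp add: const_fr_def One_fract_def one_pCons)
next
  case (Suc n)
  have "const_fr (c ^ Suc n) = Fract ([:c:] * [:c ^ n:]) (1 * 1)"
    by (simp add: const_fr_def mult.commute)
  also have "\<dots> = const_fr c * const_fr (c ^ n)" by (simp add: const_fr_def)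
  finally show ?case using Suc by simp
qed

lemma fract_as_polys: "\<exists>p q. q \<noteq> 0 \<and> f = poly_fr p * inverse (poly_fr q)"
proof (cases f)
  case (Fract a b)
  then show ?thesis by (intro exI[of _ a] exI[of _ b]) (simp add: poly_fr_def)
qed

lemma separate:
  assumes t1: "torsion_ext v w1" and t2: "torsion_ext v w2"
    and p: "p \<noteq> 0" and lt: "w2 (poly_fr p) < w1 (poly_fr p)"
  shows "\<exists>q. q \<noteq> 0 \<and> w1 (poly_fr q) = 0 \<and> w2 (poly_fr q) < 0"
    and "\<exists>r. r \<noteq> 0 \<and> 0 < w1 (poly_fr r) \<and> w2 (poly_fr r) = 0"
proof -
  have v1: "valuation w1" and c1: "\<And>c. c \<noteq> 0 \<Longrightarrow> w1 (const_fr c) = v c"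
    and tor1: "\<And>f. f \<noteq> 0 \<Longrightarrow> \<exists>n>0. \<exists>a. a \<noteq> 0 \<and> gmult n (w1 f) = v a"
    using t1 by (auto simp: torsion_ext_def)
  have v2: "valuation w2" and c2: "\<And>c. c \<noteq> 0 \<Longrightarrow> w2 (const_fr c) = v c"
    and tor2: "\<And>f. f \<noteq> 0 \<Longrightarrow> \<exists>n>0. \<exists>a. a \<noteq> 0 \<and> gmult n (w2 f) = v a"
    using t2 by (auto simp: torsion_ext_def)
  define x where "x = poly_fr p"
  have x0: "x \<noteq> 0" using p by (simp add: x_def)
  obtain n a where n: "n > 0" "a \<noteq> 0" "gmult n (w1 x) = v a" using tor1[OF x0] by blast
  obtain m b where m: "m > 0" "b \<noteq> 0" "gmult m (w2 x) = v b" using tor2[OF x0] by blast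
  define A where "A = a ^ m"
  define B where "B = b ^ n"
  have A0: "A \<noteq> 0" and B0: "B \<noteq> 0" using n m by (auto simp: A_def B_def)
  define N where "N = m * n"
  have N0: "N > 0" using n m by (simp add: N_def)
  have cA: "const_fr A \<noteq> 0" "const_fr B \<noteq> 0" using A0 B0 by auto
  have w1A: "w1 (const_fr A) = gmult m (v a)"
    using val_power[OF v1, of "const_fr a" m] n c1[of a] c1[OF A0]
    by (simp add: A_def const_fr_power)
  have w2A: "w2 (const_fr A) = gmult m (v a)"
    using val_power[OF v2, of "const_fr a" m] n c2[of a] c2[OF A0]
    by (simp add: A_def const_fr_power)
  have w1B: "w1 (const_fr B) = gmult n (v b)"
    using val_power[OF v1, of "const_fr b" n] m c1[of b] c1[OF B0]
    by (simp add: B_def const_fr_power)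
  have w2B: "w2 (const_fr B) = gmult n (v b)"
    using val_power[OF v2, of "const_fr b" n] m c2[of b] c2[OF B0]
    by (simp add: B_def const_fr_power)
  have xN1: "w1 (x ^ N) = gmult m (v a)"
    using val_power[OF v1 x0, of N] n by (simp add: N_def gmult_mult)
  have xN2: "w2 (x ^ N) = gmult n (v b)"
    using val_power[OF v2 x0, of N] m gmult_mult[of n m "w2 x"] by (simp add: N_def mult.commute)
  have ltN: "w2 (x ^ N) < w1 (x ^ N)"
    using val_power[OF v2 x0, of N] val_power[OF v1 x0, of N] gmult_mono_strict[OF N0 lt]
    by (simp add: x_def)
  have xN0: "x ^ N \<noteq> 0" using x0 by simp
  show "\<exists>q. q \<noteq> 0 \<and> w1 (poly_fr q) = 0 \<and> w2 (poly_fr q) < 0"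
  proof (intro exI conjI)
    let ?q = "smult (inverse A) (p ^ N)"
    have eq: "poly_fr ?q = x ^ N * inverse (const_fr A)"
      by (simp add: poly_fr_smult poly_fr_power const_fr_inverse x_def mult.commute)
    show "?q \<noteq> 0" using A0 p by simp
    show "w1 (poly_fr ?q) = 0" unfolding eq using val_div[OF v1 xN0 cA(1)] xN1 w1A by simp
    show "w2 (poly_fr ?q) < 0" unfolding eq using val_div[OF v2 xN0 cA(1)] xN1 w2A ltN by simp
  qed
  show "\<exists>r. r \<noteq> 0 \<and> 0 < w1 (poly_fr r) \<and> w2 (poly_fr r) = 0"
  proof (intro exI conjI)
    let ?q = "smult (inverse B) (p ^ N)"
    have eq: "poly_fr ?q = x ^ N * inverse (const_fr B)"
      by (simp add: poly_fr_smult poly_fr_power const_fr_inverse x_def mult.commute)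
    show "?q \<noteq> 0" using B0 p by simp
    show "0 < w1 (poly_fr ?q)" unfolding eq using val_div[OF v1 xN0 cA(2)] xN2 w1B ltN by simp
    show "w2 (poly_fr ?q) = 0" unfolding eq using val_div[OF v2 xN0 cA(2)] xN2 w2B by simp
  qed
qed


lemma tor_val: "torsion_ext v w \<Longrightarrow> valuation w"
  by (simp add: torsion_ext_def)

lemma uniq:
  assumes t1: "torsion_ext v w1" and t2: "torsion_ext v w2"
    and eq: "val_ring w1 = val_ring w2" and f: "f \<noteq> 0"
  shows "w1 f = w2 f"
proof -
  have v1: "valuation w1" and c1: "\<And>c. c \<noteq> 0 \<Longrightarrow> w1 (const_fr c) = v c"
    and tor1: "\<And>f. f \<noteq> 0 \<Longrightarrow> \<exists>n>0. \<exists>a. a \<noteq> 0 \<and> gmult n (w1 f) = v a"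
    using t1 by (auto simp: torsion_ext_def)
  have v2: "valuation w2" and c2: "\<And>c. c \<noteq> 0 \<Longrightarrow> w2 (const_fr c) = v c"
    using t2 by (auto simp: torsion_ext_def)
  obtain n a where n: "n > 0" "a \<noteq> 0" "gmult n (w1 f) = v a" using tor1[OF f] by blast
  define y where "y = f ^ n * inverse (const_fr a)"
  have fn: "f ^ n \<noteq> 0" using f by simp
  have ca: "const_fr a \<noteq> 0" using n by simp
  have y0: "y \<noteq> 0" using fn ca by (simp add: y_def)
  have iy0: "inverse y \<noteq> 0" using y0 by simp
  have "w1 y = 0" unfolding y_def using val_div[OF v1 fn ca] val_power[OF v1 f] c1[OF n(2)] n by simp
  hence "y \<in> val_ring w1" "inverse y \<in> val_ring w1"
    by (simp_all add: in_val_ring[OF y0] in_val_ring[OF iy0] val_inverse[OF v1 y0])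
  hence "y \<in> val_ring w2" "inverse y \<in> val_ring w2" using eq by auto
  hence "0 \<le> w2 y" "0 \<le> - w2 y"
    using in_val_ring[OF y0, of w2] in_val_ring[OF iy0, of w2] val_inverse[OF v2 y0] by auto
  hence "w2 y = 0" by simp
  hence "gmult n (w2 f) = v a"
    unfolding y_def using val_div[OF v2 fn ca] val_power[OF v2 f] c2[OF n(2)] by simp
  thus ?thesis using n gmult_inj[of n "w1 f" "w2 f"] by simp
qed

lemma Kpoly_iff: "y \<in> Kpoly \<longleftrightarrow> (\<exists>p. y = poly_fr p)"
  by (auto simp: Kpoly_def)

lemma zero_in_val_ring: "0 \<in> val_ring w" by (simp add: val_ring_def)
lemma zero_in_max_ideal: "0 \<in> max_ideal (val_ring w)" by (simp add: val_ring_def max_ideal_def)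

lemma le_iff_ring:
  assumes t1: "torsion_ext v w1" and t2: "torsion_ext v w2"
  shows "val_le w1 w2 \<longleftrightarrow> val_ring w1 \<inter> Kpoly \<subseteq> val_ring w2 \<inter> Kpoly"
proof
  assume le: "val_le w1 w2"
  show "val_ring w1 \<inter> Kpoly \<subseteq> val_ring w2 \<inter> Kpoly"
  proof
    fix y assume y: "y \<in> val_ring w1 \<inter> Kpoly"
    then obtain p where p: "y = poly_fr p" by (auto simp: Kpoly_iff)
    show "y \<in> val_ring w2 \<inter> Kpoly"
    proof (cases "p = 0")
      case True then show ?thesis using y p zero_in_val_ring by auto
    next
      case False
      then have "w1 y \<le> w2 y" using le p by (simp add: val_le_def)
      moreover have "0 \<le> w1 y" using y False p in_val_ring[of y w1] by auto
      ultimately show ?thesis using y False p in_val_ring[of y w2] by auto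
    qed
  qed
next
  assume sub: "val_ring w1 \<inter> Kpoly \<subseteq> val_ring w2 \<inter> Kpoly"
  show "val_le w1 w2"
    unfolding val_le_def
  proof (intro allI impI, rule ccontr)
    fix p :: "'a poly" assume p: "p \<noteq> 0" and "\<not> w1 (poly_fr p) \<le> w2 (poly_fr p)"
    hence "w2 (poly_fr p) < w1 (poly_fr p)" by simp
    from separate(1)[OF t1 t2 p this] obtain q where
      q: "q \<noteq> 0" "w1 (poly_fr q) = 0" "w2 (poly_fr q) < 0" by blast
    have "poly_fr q \<in> val_ring w1 \<inter> Kpoly" using q in_val_ring[of "poly_fr q" w1]
      by (auto simp: Kpoly_def)
    hence "poly_fr q \<in> val_ring w2" using sub by auto
    thus False using q in_val_ring[of "poly_fr q" w2] by auto
  qed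
qed

lemma le_iff_max:
  assumes t1: "torsion_ext v w1" and t2: "torsion_ext v w2"
  shows "val_le w1 w2 \<longleftrightarrow> max_ideal (val_ring w1) \<inter> Kpoly \<subseteq> max_ideal (val_ring w2) \<inter> Kpoly"
proof
  have v1: "valuation w1" and v2: "valuation w2" using t1 t2 by (auto simp: tor_val)
  assume le: "val_le w1 w2"
  show "max_ideal (val_ring w1) \<inter> Kpoly \<subseteq> max_ideal (val_ring w2) \<inter> Kpoly"
  proof
    fix y assume y: "y \<in> max_ideal (val_ring w1) \<inter> Kpoly"
    then obtain p where p: "y = poly_fr p" by (auto simp: Kpoly_iff)
    show "y \<in> max_ideal (val_ring w2) \<inter> Kpoly"
    proof (cases "p = 0")
      case True then show ?thesis using y p zero_in_max_ideal by auto
    next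
      case False
      then have "w1 y \<le> w2 y" using le p by (simp add: val_le_def)
      moreover have "0 < w1 y" using y False p in_max_ideal[OF v1, of y] by auto
      ultimately show ?thesis using y False p in_max_ideal[OF v2, of y] by auto
    qed
  qed
next
  have v1: "valuation w1" and v2: "valuation w2" using t1 t2 by (auto simp: tor_val)
  assume sub: "max_ideal (val_ring w1) \<inter> Kpoly \<subseteq> max_ideal (val_ring w2) \<inter> Kpoly"
  show "val_le w1 w2"
    unfolding val_le_def
  proof (intro allI impI, rule ccontr)
    fix p :: "'a poly" assume p: "p \<noteq> 0" and "\<not> w1 (poly_fr p) \<le> w2 (poly_fr p)"
    hence "w2 (poly_fr p) < w1 (poly_fr p)" by simp
    from separate(2)[OF t1 t2 p this] obtain q where
      q: "q \<noteq> 0" "0 < w1 (poly_fr q)" "w2 (poly_fr q) = 0" by blast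
    have "poly_fr q \<in> max_ideal (val_ring w1) \<inter> Kpoly" using q in_max_ideal[OF v1, of "poly_fr q"]
      by (auto simp: Kpoly_def)
    hence "poly_fr q \<in> max_ideal (val_ring w2)" using sub by auto
    thus False using q in_max_ideal[OF v2, of "poly_fr q"] by auto
  qed
qed

lemma le_antisym_ring:
  assumes t1: "torsion_ext v w1" and t2: "torsion_ext v w2"
    and le1: "val_le w1 w2" and le2: "val_le w2 w1"
  shows "val_ring w1 = val_ring w2"
proof -
  have v1: "valuation w1" and v2: "valuation w2" using t1 t2 by (auto simp: tor_val)
  have pe: "w1 (poly_fr p) = w2 (poly_fr p)" if "p \<noteq> 0" for p
    using le1 le2 that unfolding val_le_def by (meson order_antisym)
  have "w1 f = w2 f" if f: "f \<noteq> 0" for f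
  proof -
    obtain p q where pq: "q \<noteq> 0" "f = poly_fr p * inverse (poly_fr q)"
      using fract_as_polys by blast
    have p0: "p \<noteq> 0" using f pq by auto
    have "poly_fr p \<noteq> 0" "poly_fr q \<noteq> 0" using p0 pq by auto
    thus ?thesis using pq val_div[OF v1] val_div[OF v2] pe[OF p0] pe[OF pq(1)] by simp
  qed
  thus ?thesis unfolding val_ring_def by (intro set_eqI) (simp, metis)
qed

theorem mainTheorem3:
  fixes v :: "'a::field \<Rightarrow> 'g::linordered_ab_group_add"
    and w1 w2 :: "'a poly fract \<Rightarrow> 'g"
  assumes "valuation v"
    and "torsion_ext v w1" and "torsion_ext v w2"
  shows "(val_le w1 w2 \<longleftrightarrow> val_ring w1 \<inter> Kpoly \<subseteq> val_ring w2 \<inter> Kpoly)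
       \<and> (val_le w1 w2 \<longleftrightarrow> max_ideal (val_ring w1) \<inter> Kpoly \<subseteq> max_ideal (val_ring w2) \<inter> Kpoly)
       \<and> (val_ring w1 = val_ring w2 \<longleftrightarrow> val_ring w1 \<inter> Kpoly = val_ring w2 \<inter> Kpoly)
       \<and> (val_ring w1 = val_ring w2 \<longleftrightarrow> max_ideal (val_ring w1) \<inter> Kpoly = max_ideal (val_ring w2) \<inter> Kpoly)
       \<and> partial_order_on (torsion_exts v) (torsion_le v)"
proof (intro conjI)
  note t1 = assms(2) and t2 = assms(3)
  show A: "val_le w1 w2 \<longleftrightarrow> val_ring w1 \<inter> Kpoly \<subseteq> val_ring w2 \<inter> Kpoly"
    by (rule le_iff_ring[OF t1 t2])
  show B: "val_le w1 w2 \<longleftrightarrow> max_ideal (val_ring w1) \<inter> Kpoly \<subseteq> max_ideal (val_ring w2) \<inter> Kpoly"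
    by (rule le_iff_max[OF t1 t2])
  show "val_ring w1 = val_ring w2 \<longleftrightarrow> val_ring w1 \<inter> Kpoly = val_ring w2 \<inter> Kpoly"
    using le_iff_ring[OF t1 t2] le_iff_ring[OF t2 t1] le_antisym_ring[OF t1 t2] by blast
  show "val_ring w1 = val_ring w2 \<longleftrightarrow> max_ideal (val_ring w1) \<inter> Kpoly = max_ideal (val_ring w2) \<inter> Kpoly"
  proof
    assume "val_ring w1 = val_ring w2"
    then show "max_ideal (val_ring w1) \<inter> Kpoly = max_ideal (val_ring w2) \<inter> Kpoly" by simp
  next
    assume "max_ideal (val_ring w1) \<inter> Kpoly = max_ideal (val_ring w2) \<inter> Kpoly"
    then show "val_ring w1 = val_ring w2"
      using le_iff_max[OF t1 t2] le_iff_max[OF t2 t1] le_antisym_ring[OF t1 t2] by simp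
  qed
  show "partial_order_on (torsion_exts v) (torsion_le v)"
    unfolding partial_order_on_def preorder_on_def
  proof (intro conjI)
    show "torsion_le v \<subseteq> torsion_exts v \<times> torsion_exts v"
      by (auto simp: torsion_le_def torsion_exts_def)
    show "refl_on (torsion_exts v) (torsion_le v)"
      by (auto simp: refl_on_def torsion_le_def torsion_exts_def val_le_def)
    show "trans (torsion_le v)"
    proof (rule transI)
      fix x y z assume "(x, y) \<in> torsion_le v" "(y, z) \<in> torsion_le v"
      then obtain a b b' c :: "'a poly fract \<Rightarrow> 'g" where
        h: "x = val_ring a" "y = val_ring b" "torsion_ext v a" "torsion_ext v b" "val_le a b"
           "y = val_ring b'" "z = val_ring c" "torsion_ext v b'" "torsion_ext v c" "val_le b' c"
        unfolding torsion_le_def by blast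
      have "\<And>f. f \<noteq> 0 \<Longrightarrow> b f = b' f" using uniq[OF h(4) h(8)] h by simp
      hence "val_le a c" using h(5) h(10) unfolding val_le_def
        by (metis order_trans poly_fr_eq0)
      thus "(x, z) \<in> torsion_le v" using h unfolding torsion_le_def by blast
    qed
    show "antisym (torsion_le v)"
    proof (rule antisymI)
      fix x y assume "(x, y) \<in> torsion_le v" "(y, x) \<in> torsion_le v"
      then obtain a b a' b' :: "'a poly fract \<Rightarrow> 'g" where
        h: "x = val_ring a" "y = val_ring b" "torsion_ext v a" "torsion_ext v b" "val_le a b"
           "y = val_ring b'" "x = val_ring a'" "torsion_ext v b'" "torsion_ext v a'" "val_le b' a'"
        unfolding torsion_le_def by blast
      have e1: "\<And>f. f \<noteq> 0 \<Longrightarrow> b f = b' f" using uniq[OF h(4) h(8)] h by simp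
      have e2: "\<And>f. f \<noteq> 0 \<Longrightarrow> a f = a' f" using uniq[OF h(3) h(9)] h by simp
      have "val_le b a" using h(10) e1 e2 unfolding val_le_def by (metis poly_fr_eq0)
      thus "x = y" using le_antisym_ring[OF h(3) h(4) h(5)] h by simp
    qed
  qed
qed

end
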